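(* Let $b^{(1)},b^{(2)}\in Diag((\hbar))$ be constant. On families of pairwise commuting operators $L_\alpha=\partial/\partial x^\alpha-\hbar^{-1}C_\alpha(x)$, $\alpha=1,\dots,n$, admitting a dressing transformation $T$, consider the two flows $$\frac{\partial L_\alpha}{\partial t^i}=[M^{(i)}_{\le-1},L_\alpha],\qquad M^{(i)}=Tb^{(i)}T^{-1},\quad i=1,2.$$ These flows commute: computing mixed second derivatives by means of these equations, $\frac{\partial}{\partial t^1}\frac{\partial L_\alpha}{\partial t^2}=\frac{\partial}{\partial t^2}\frac{\partial L_\alpha}{\partial t^1}$ for all $\alpha$.
   Context: $C_\alpha$: $Mat(n,\mathbb C)$-valued analytic functions of $x$; $Diag$: diagonal matrices; $Diag((\hbar))$: formal Laurent series in $\hbar$ with diagonal coefficients. A dressing transformation is an invertible $T\in Mat(n,\mathbb C)[[\hbar]]$ with $T^{-1}L_\alpha T=\partial/\partial x^\alpha+h_\alpha$, $h_\alpha\in\hbar^{-1}Diag[[\hbar]]$ for all $\alpha$; it is assumed that the leading terms of $h_\alpha$ span $Diag$ (as in the semisimple Frobenius manifold setting), so $T$ is unique up to right multiplication by diagonal series and $M^{(i)}$ is well defined. For $v=\sum_lv_l\hbar^l$, $v_{\le k}=\sum_{l\le k}v_l\hbar^l$. $[\partial+A,M]=\partial M+[A,M]$; $\partial L_\alpha/\partial t$ means $-\hbar^{-1}\partial C_\alpha/\partial t$. In computing $\partial_{t^1}\partial_{t^2}L_\alpha$ one differentiates $[M^{(2)}_{\le-1},L_\alpha]$ along the $t^1$-flow,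 including the induced variation of $M^{(2)}$. *)

theory Defs
  imports "HOL-Analysis.Analysis"
begin

text \<open>
  The number n of coordinates x^1..x^n equals the matrix size n;
  both are indexed by a finite type 'n (so n = CARD('n)). An element of Mat(n, C_alpha) is a matrix-valued
  function complex^'n => complex^'n^'n, considered on an open set U.
  A formal Laurent series in hbar with such coefficients is a map
  int => (complex^'n => complex^'n^'n), the value at k being the coefficient of hbar^k.
\<close>

type_synonym 'n mfun = "complex^'n \<Rightarrow> complex^'n^'n"
type_synonym 'n lser = "int \<Rightarrow> 'n mfun"

definition mv_analytic_on :: "(complex^'n::finite \<Rightarrow> complex) \<Rightarrow> (complex^'n) set \<Rightarrow> bool" where
  "mv_analytic_on f U \<longleftrightarrow>
     (\<forall>x\<in>U. \<exists>r>0. \<exists>a :: ('n \<Rightarrow> nat) \<Rightarrow> complex.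
        \<forall>y\<in>ball x r. ((\<lambda>k. a k * (\<Prod>i\<in>UNIV. (y$i - x$i) ^ k i)) has_sum f y) UNIV)"

definition pdx :: "'n::finite \<Rightarrow> (complex^'n \<Rightarrow> complex) \<Rightarrow> complex^'n \<Rightarrow> complex" where
  "pdx \<alpha> f x = deriv (\<lambda>z. f (\<chi> i. if i = \<alpha> then z else x$i)) (x$\<alpha>)"

definition mderiv :: "'n::finite \<Rightarrow> 'n mfun \<Rightarrow> 'n mfun" where
  "mderiv \<alpha> F x = (\<chi> i j. pdx \<alpha> (\<lambda>y. F y $ i $ j) x)"

definition ser_analytic :: "(complex^'n::finite) set \<Rightarrow> 'n lser \<Rightarrow> bool" where
  "ser_analytic U A \<longleftrightarrow> (\<forall>k i j. mv_analytic_on (\<lambda>x. A k x $ i $ j) U)"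

definition lmul :: "'n::finite lser \<Rightarrow> 'n lser \<Rightarrow> 'n lser" where
  "lmul A B = (\<lambda>k x. \<Sum>\<^sub>\<infinity>i. A i x ** B (k - i) x)"

definition ladd :: "'n::finite lser \<Rightarrow> 'n lser \<Rightarrow> 'n lser" where
  "ladd A B = (\<lambda>k x. A k x + B k x)"

definition lsub :: "'n::finite lser \<Rightarrow> 'n lser \<Rightarrow> 'n lser" where
  "lsub A B = (\<lambda>k x. A k x - B k x)"

definition lone :: "'n::finite lser" where
  "lone = (\<lambda>k x. if k = 0 then mat 1 else 0)"

definition lbr :: "'n::finite lser \<Rightarrow> 'n lser \<Rightarrow> 'n lser" where
  "lbr A B = lsub (lmul A B) (lmul B A)"

definition ld :: "'n::finite \<Rightarrow> 'n lser \<Rightarrow> 'n lser" where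
  "ld \<alpha> A = (\<lambda>k. mderiv \<alpha> (A k))"

definition trunc :: "'n::finite lser \<Rightarrow> 'n lser" where
  "trunc A = (\<lambda>k x. if k \<le> -1 then A k x else 0)"

definition cser :: "(int \<Rightarrow> complex^'n^'n) \<Rightarrow> 'n::finite lser" where
  "cser b = (\<lambda>k x. b k)"

definition isdiag :: "complex^'n^'n \<Rightarrow> bool" where
  "isdiag D \<longleftrightarrow> (\<forall>i j. i \<noteq> j \<longrightarrow> D $ i $ j = 0)"

definition diag_laurent :: "(int \<Rightarrow> complex^'n^'n) \<Rightarrow> bool" where
  "diag_laurent b \<longleftrightarrow> (\<exists>N. \<forall>k<N. b k = 0) \<and> (\<forall>k. isdiag (b k))"

definition in_hdiag :: "(complex^'n::finite) set \<Rightarrow> 'n lser \<Rightarrow> bool" where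
  "in_hdiag U h \<longleftrightarrow> (\<forall>x\<in>U. (\<forall>k< -1. h k x = 0) \<and> (\<forall>k. isdiag (h k x)))"

definition power_ser :: "(complex^'n::finite) set \<Rightarrow> 'n lser \<Rightarrow> bool" where
  "power_ser U T \<longleftrightarrow> (\<forall>k<0. T k = (\<lambda>x. 0)) \<and> ser_analytic U T"

text \<open>Potential of L_alpha = d/dx^alpha - hbar^{-1} C_alpha: the series -hbar^{-1} C_alpha.\<close>
definition Lpot :: "('n::finite \<Rightarrow> 'n mfun) \<Rightarrow> 'n \<Rightarrow> 'n lser" where
  "Lpot C \<alpha> = (\<lambda>k x. if k = -1 then - C \<alpha> x else 0)"

text \<open>Pairwise commuting: [d_a + A_a, d_b + A_b] = d_a A_b - d_b A_a + [A_a, A_b] = 0.\<close>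
definition commuting_family :: "(complex^'n::finite) set \<Rightarrow> ('n \<Rightarrow> 'n mfun) \<Rightarrow> bool" where
  "commuting_family U C \<longleftrightarrow>
     (\<forall>\<alpha> \<beta>. \<forall>x\<in>U. \<forall>k.
        ladd (lsub (ld \<alpha> (Lpot C \<beta>)) (ld \<beta> (Lpot C \<alpha>))) (lbr (Lpot C \<alpha>) (Lpot C \<beta>)) k x = 0)"

text \<open>h_alpha with T^{-1} L_alpha T = d_alpha + h_alpha, namely
  h_alpha = T^{-1} d_alpha T + T^{-1} A_alpha T (Ti is T^{-1}).\<close>
definition hser :: "('n::finite \<Rightarrow> 'n mfun) \<Rightarrow> 'n lser \<Rightarrow> 'n lser \<Rightarrow> 'n \<Rightarrow> 'n lser" where
  "hser C T Ti \<alpha> = ladd (lmul Ti (ld \<alpha> T)) (lmul Ti (lmul (Lpot C \<alpha>) T))"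

text \<open>T is a dressing transformation with inverse Ti, and the leading terms of the
  h_alpha span Diag (pointwise on U, over the complex numbers).\<close>
definition dressing :: "(complex^'n::finite) set \<Rightarrow> ('n \<Rightarrow> 'n mfun) \<Rightarrow> 'n lser \<Rightarrow> 'n lser \<Rightarrow> bool" where
  "dressing U C T Ti \<longleftrightarrow>
     power_ser U T \<and> power_ser U Ti \<and>
     (\<forall>x\<in>U. \<forall>k. lmul T Ti k x = lone k x \<and> lmul Ti T k x = lone k x) \<and>
     (\<forall>\<alpha>. in_hdiag U (hser C T Ti \<alpha>))"

definition leading_span :: "(complex^'n::finite) set \<Rightarrow> ('n \<Rightarrow> 'n mfun) \<Rightarrow> 'n lser \<Rightarrow> 'n lser \<Rightarrow> bool" where
  "leading_span U C T Ti \<longleftrightarrow>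
     (\<forall>x\<in>U. \<forall>D. isdiag D \<longrightarrow>
        (\<exists>c :: 'n \<Rightarrow> complex. D = (\<chi> i j. \<Sum>\<alpha>\<in>UNIV. c \<alpha> * hser C T Ti \<alpha> (-1) x $ i $ j)))"

definition Mser :: "'n::finite lser \<Rightarrow> 'n lser \<Rightarrow> (int \<Rightarrow> complex^'n^'n) \<Rightarrow> 'n lser" where
  "Mser T Ti b = lmul (lmul T (cser b)) Ti"

text \<open>Right-hand side of the flow: [M_{<=-1}, L_alpha] = -d_alpha M_{<=-1} + [M_{<=-1}, A_alpha],
  using the convention [d + A, M] = dM + [A, M].\<close>
definition flowL :: "('n::finite \<Rightarrow> 'n mfun) \<Rightarrow> 'n lser \<Rightarrow> 'n \<Rightarrow> 'n lser" where
  "flowL C M \<alpha> = ladd (lsub (\<lambda>k x. 0) (ld \<alpha> (trunc M))) (lbr (trunc M) (Lpot C \<alpha>))"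

text \<open>Induced first-order variation of the dressing: dT is a variation of T in
  Mat(n,C_alpha)[[hbar]] such that, when the potentials vary by dA_alpha (variation of
  L_alpha), T + eps dT still dresses L + eps dL to first order, i.e. the variation
  of h_alpha = T^{-1} d_alpha T + T^{-1} A_alpha T stays in hbar^{-1} Diag[[hbar]].
  (The variation of T^{-1} is -T^{-1} dT T^{-1}.)\<close>
definition var_h :: "('n::finite \<Rightarrow> 'n mfun) \<Rightarrow> 'n lser \<Rightarrow> 'n lser \<Rightarrow> 'n lser \<Rightarrow> ('n \<Rightarrow> 'n lser) \<Rightarrow> 'n \<Rightarrow> 'n lser" where
  "var_h C T Ti dT dA \<alpha> =
     ladd (ladd (ladd (ladd
       (lsub (\<lambda>k x. 0) (lmul (lmul (lmul Ti dT) Ti) (ld \<alpha> T)))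
       (lmul Ti (ld \<alpha> dT)))
       (lsub (\<lambda>k x. 0) (lmul (lmul (lmul (lmul Ti dT) Ti) (Lpot C \<alpha>)) T)))
       (lmul (lmul Ti (dA \<alpha>)) T))
       (lmul (lmul Ti (Lpot C \<alpha>)) dT)"

definition dressing_variation ::
  "(complex^'n::finite) set \<Rightarrow> ('n \<Rightarrow> 'n mfun) \<Rightarrow> 'n lser \<Rightarrow> 'n lser \<Rightarrow> ('n \<Rightarrow> 'n lser) \<Rightarrow> 'n lser \<Rightarrow> bool" where
  "dressing_variation U C T Ti dA dT \<longleftrightarrow>
     power_ser U dT \<and> (\<forall>\<alpha>. in_hdiag U (var_h C T Ti dT dA \<alpha>))"

definition var_M :: "'n::finite lser \<Rightarrow> 'n lser \<Rightarrow> (int \<Rightarrow> complex^'n^'n) \<Rightarrow> 'n lser \<Rightarrow> 'n lser" where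
  "var_M T Ti b dT = lsub (lmul (lmul dT (cser b)) Ti) (lmul (lmul (Mser T Ti b) dT) Ti)"

text \<open>d/dt^i (d L_alpha / dt^j), computed from the flow equations:
  [ (dM^{(j)})_{<=-1}, L_alpha ] + [ M^{(j)}_{<=-1}, dL_alpha/dt^i ],
  where dM^{(j)} is the variation of M^{(j)} induced by the variation dT of T along t^i.\<close>
definition mixed_second ::
  "('n::finite \<Rightarrow> 'n mfun) \<Rightarrow> 'n lser \<Rightarrow> 'n lser \<Rightarrow> (int \<Rightarrow> complex^'n^'n) \<Rightarrow> (int \<Rightarrow> complex^'n^'n)
    \<Rightarrow> 'n lser \<Rightarrow> 'n \<Rightarrow> 'n lser" where
  "mixed_second C T Ti bi bj dTi \<alpha> =
     ladd (flowL C (var_M T Ti bj dTi) \<alpha>)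
          (lbr (trunc (Mser T Ti bj)) (flowL C (Mser T Ti bi) \<alpha>))"

end

theory Submission
  imports Defs "HOL-Computational_Algebra.Formal_Laurent_Series"
begin

typedef ('n::finite) sqm = "UNIV :: (complex^'n^'n) set" morphisms Rep_sqm Abs_sqm by auto

lemma matrix_add_rdistrib': "((B + C) ** A) = (B ** A) + (C ** A)"
  by (vector matrix_matrix_mult_def sum.distrib[symmetric] field_simps)

instantiation sqm :: (finite) ring_1
begin
definition "0 = Abs_sqm 0"
definition "1 = Abs_sqm (mat 1)"
definition "a + b = Abs_sqm (Rep_sqm a + Rep_sqm b)"
definition "a - b = Abs_sqm (Rep_sqm a - Rep_sqm b)"
definition "- a = Abs_sqm (- Rep_sqm a)"
definition "a * b = Abs_sqm (Rep_sqm a ** Rep_sqm b)"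
instance
proof
  fix a b c :: "'a sqm"
  show "a * b * c = a * (b * c)"
    by (simp add: times_sqm_def Abs_sqm_inverse matrix_mul_assoc)
  show "1 * a = a" by (simp add: times_sqm_def one_sqm_def Abs_sqm_inverse Rep_sqm_inverse)
  show "a * 1 = a" by (simp add: times_sqm_def one_sqm_def Abs_sqm_inverse Rep_sqm_inverse)
  show "a + b + c = a + (b + c)" by (simp add: plus_sqm_def Abs_sqm_inverse add.assoc)
  show "a + b = b + a" by (simp add: plus_sqm_def add.commute)
  show "0 + a = a" by (simp add: plus_sqm_def zero_sqm_def Abs_sqm_inverse Rep_sqm_inverse)
  show "- a + a = 0" by (simp add: plus_sqm_def zero_sqm_def uminus_sqm_def Abs_sqm_inverse)
  show "a - b = a + - b" by (simp add: plus_sqm_def minus_sqm_def uminus_sqm_def Abs_sqm_inverse)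
  show "(a + b) * c = a * c + b * c"
    by (simp add: plus_sqm_def times_sqm_def Abs_sqm_inverse matrix_add_rdistrib')
  show "a * (b + c) = a * b + a * c"
    by (simp add: plus_sqm_def times_sqm_def Abs_sqm_inverse matrix_add_ldistrib)
  show "(0::'a sqm) \<noteq> 1"
  proof
    assume "(0::'a sqm) = 1"
    then have "(0::complex^'a^'a) = mat 1" by (simp add: zero_sqm_def one_sqm_def Abs_sqm_inject)
    then have "(0::complex^'a^'a) $ i $ i = mat 1 $ i $ i" for i by simp
    then show False by (simp add: mat_def)
  qed
qed
end

lemma Rep_sqm_simps:
  "Rep_sqm (a * b) = Rep_sqm a ** Rep_sqm b"
  "Rep_sqm (a + b) = Rep_sqm a + Rep_sqm b"
  "Rep_sqm (a - b) = Rep_sqm a - Rep_sqm b"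
  "Rep_sqm (- a) = - Rep_sqm a"
  "Rep_sqm 0 = 0" "Rep_sqm 1 = mat 1"
  by (simp_all add: times_sqm_def plus_sqm_def minus_sqm_def uminus_sqm_def zero_sqm_def one_sqm_def Abs_sqm_inverse)

lemma Abs_sqm_simps:
  "Abs_sqm (A ** B) = Abs_sqm A * Abs_sqm B"
  "Abs_sqm (A + B) = Abs_sqm A + Abs_sqm B"
  "Abs_sqm (A - B) = Abs_sqm A - Abs_sqm B"
  "Abs_sqm (- A) = - Abs_sqm A"
  "Abs_sqm 0 = 0" "Abs_sqm (mat 1) = 1"
  by (simp_all add: times_sqm_def plus_sqm_def minus_sqm_def uminus_sqm_def zero_sqm_def one_sqm_def Abs_sqm_inverse)

lemma Abs_sqm_sum: "Abs_sqm (sum f S) = (\<Sum>i\<in>S. Abs_sqm (f i))"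
  by (induction S rule: infinite_finite_induct) (simp_all add: Abs_sqm_simps)

lemma Rep_sqm_sum: "Rep_sqm (sum f S) = (\<Sum>i\<in>S. Rep_sqm (f i))"
  by (induction S rule: infinite_finite_induct) (simp_all add: Rep_sqm_simps)

lemma Abs_sqm_eq_iff: "Abs_sqm A = Abs_sqm B \<longleftrightarrow> A = B"
  by (simp add: Abs_sqm_inject)

lemma Abs_sqm_0_iff: "Abs_sqm A = 0 \<longleftrightarrow> A = 0"
  by (simp add: zero_sqm_def Abs_sqm_inject)


notation fls_nth (infixl \<open>$$\<close> 75)

lemma fls_times_nth_bnd:
  fixes f g :: "'a::ring fls"
  assumes fa: "\<And>i. i < a \<Longrightarrow> f $$ i = 0" and gb: "\<And>j. j < b \<Longrightarrow> g $$ j = 0"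
  shows "(f * g) $$ n = (\<Sum>i=a..n-b. f $$ i * g $$ (n - i))"
proof (cases "f = 0 \<or> g = 0")
  case True
  then show ?thesis by auto
next
  case False
  then have "a \<le> fls_subdegree f" "b \<le> fls_subdegree g"
    using fls_subdegree_geI fa gb by blast+
  then have "(f * g) $$ n = (\<Sum>i=fls_subdegree f..n - fls_subdegree g. f $$ i * g $$ (n - i))"
    by (simp add: fls_times_nth(2))
  also have "\<dots> = (\<Sum>i=a..n-b. f $$ i * g $$ (n - i))"
  proof (rule sum.mono_neutral_left)
    show "\<forall>i\<in>{a..n - b} - {fls_subdegree f..n - fls_subdegree g}. f $$ i * g $$ (n - i) = 0"
    proof
      fix i assume "i \<in> {a..n - b} - {fls_subdegree f..n - fls_subdegree g}"
      then have "i < fls_subdegree f \<or> n - i < fls_subdegree g" by auto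
      then show "f $$ i * g $$ (n - i) = 0" by auto
    qed
  qed (use \<open>a \<le> _\<close> \<open>b \<le> _\<close> in auto)
  finally show ?thesis .
qed

definition bnd :: "'n::finite lser \<Rightarrow> int \<Rightarrow> bool" where
  "bnd A N \<longleftrightarrow> (\<forall>k<N. \<forall>y. A k y = 0)"

definition FL :: "'n::finite lser \<Rightarrow> complex^'n \<Rightarrow> 'n sqm fls" where
  "FL A x = Abs_fls (\<lambda>k. Abs_sqm (A k x))"

lemma bndD: "bnd A N \<Longrightarrow> k < N \<Longrightarrow> A k y = 0"
  by (simp add: bnd_def)

lemma bnd_mono: "bnd A N \<Longrightarrow> M \<le> N \<Longrightarrow> bnd A M"
  by (simp add: bnd_def)

lemma FL_nth: assumes "bnd A N" shows "FL A x $$ k = Abs_sqm (A k x)"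
  unfolding FL_def
proof (rule nth_Abs_fls_ex_nat_lower_bound)
  show "\<exists>m. \<forall>n>m. Abs_sqm (A (- int n) x) = 0"
    by (rule exI[of _ "nat (- N)"]) (use assms in \<open>auto simp: bnd_def Abs_sqm_simps\<close>)
qed

lemma FL_cong: "(\<And>k. A k x = B k x) \<Longrightarrow> FL A x = FL B x"
  by (simp add: FL_def)

lemma FL_inj: assumes "bnd A a" "bnd B b" "FL A x = FL B x" shows "A k x = B k x"
proof -
  have "FL A x $$ k = FL B x $$ k" using assms(3) by simp
  then show ?thesis using FL_nth[OF assms(1)] FL_nth[OF assms(2)] by (simp add: Abs_sqm_eq_iff)
qed

lemma lmul_sum:
  assumes "bnd A a" "bnd B b"
  shows "lmul A B k x = (\<Sum>i=a..k-b. A i x ** B (k-i) x)"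
proof -
  have "lmul A B k x = infsum (\<lambda>i. A i x ** B (k-i) x) UNIV" by (simp add: lmul_def)
  also have "\<dots> = infsum (\<lambda>i. A i x ** B (k-i) x) {a..k-b}"
  proof (rule infsum_cong_neutral)
    fix i assume "i \<in> UNIV - {a..k-b}"
    then have "i < a \<or> k - i < b" by auto
    then show "A i x ** B (k-i) x = 0" using assms by (auto simp: bnd_def)
  qed auto
  also have "\<dots> = (\<Sum>i=a..k-b. A i x ** B (k-i) x)" by simp
  finally show ?thesis .
qed

lemma bnd_lmul: assumes "bnd A a" "bnd B b" shows "bnd (lmul A B) (a+b)"
  unfolding bnd_def using lmul_sum[OF assms] by auto

lemma bnd_ladd: assumes "bnd A a" "bnd B b" shows "bnd (ladd A B) (min a b)"
  using assms by (simp add: bnd_def ladd_def)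

lemma bnd_lsub: assumes "bnd A a" "bnd B b" shows "bnd (lsub A B) (min a b)"
  using assms by (simp add: bnd_def lsub_def)

lemma bnd_trunc: assumes "bnd A a" shows "bnd (trunc A) a"
  using assms by (simp add: bnd_def trunc_def)

lemma bnd_lone: "bnd lone 0"
  by (simp add: bnd_def lone_def)

lemma bnd_zero: "bnd (\<lambda>k x. 0) 0"
  by (simp add: bnd_def)

lemma FL_lmul: assumes "bnd A a" "bnd B b" shows "FL (lmul A B) x = FL A x * FL B x"
proof (rule fls_eqI)
  fix k
  have "FL (lmul A B) x $$ k = Abs_sqm (\<Sum>i=a..k-b. A i x ** B (k-i) x)"
    using FL_nth[OF bnd_lmul[OF assms]] lmul_sum[OF assms] by simp
  also have "\<dots> = (\<Sum>i=a..k-b. FL A x $$ i * FL B x $$ (k-i))"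
    by (simp add: Abs_sqm_sum Abs_sqm_simps FL_nth[OF assms(1)] FL_nth[OF assms(2)])
  also have "\<dots> = (FL A x * FL B x) $$ k"
    by (rule fls_times_nth_bnd[symmetric])
       (simp_all add: FL_nth[OF assms(1)] FL_nth[OF assms(2)] bndD[OF assms(1)] bndD[OF assms(2)] Abs_sqm_simps)
  finally show "FL (lmul A B) x $$ k = (FL A x * FL B x) $$ k" .
qed

lemma FL_ladd: assumes "bnd A a" "bnd B b" shows "FL (ladd A B) x = FL A x + FL B x"
  by (rule fls_eqI, simp only: fls_plus_nth FL_nth[OF bnd_ladd[OF assms]] FL_nth[OF assms(1)] FL_nth[OF assms(2)], simp add: ladd_def Abs_sqm_simps)

lemma FL_lsub: assumes "bnd A a" "bnd B b" shows "FL (lsub A B) x = FL A x - FL B x"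
  by (rule fls_eqI, simp only: fls_minus_nth FL_nth[OF bnd_lsub[OF assms]] FL_nth[OF assms(1)] FL_nth[OF assms(2)], simp add: lsub_def Abs_sqm_simps)

lemma FL_lone: "FL lone x = 1"
  by (rule fls_eqI, simp only: FL_nth[OF bnd_lone], simp add: lone_def Abs_sqm_simps)

lemma FL_zero: "FL (\<lambda>k x. 0) x = 0"
  by (rule fls_eqI) (simp add: FL_nth[OF bnd_zero] Abs_sqm_simps)

definition ftr :: "'a::ring_1 fls \<Rightarrow> 'a fls" where
  "ftr f = f - fps_to_fls (fls_regpart f)"

lemma ftr_nth: "ftr f $$ k = (if k \<le> -1 then f $$ k else 0)"
  by (simp add: ftr_def)

lemma FL_trunc: assumes "bnd A a" shows "FL (trunc A) x = ftr (FL A x)"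
  by (rule fls_eqI, simp only: FL_nth[OF bnd_trunc[OF assms]] ftr_nth FL_nth[OF assms], simp add: trunc_def Abs_sqm_simps)

lemma ftr_add: "ftr (f + g) = ftr f + ftr g"
  by (rule fls_eqI) (simp add: ftr_nth)

lemma ftr_diff: "ftr (f - g) = ftr f - ftr g"
  by (rule fls_eqI) (simp add: ftr_nth)

lemma ftr_uminus: "ftr (- f) = - ftr f"
  by (rule fls_eqI) (simp add: ftr_nth)

lemma ftr_0: "ftr 0 = 0"
  by (rule fls_eqI) (simp add: ftr_nth)

lemma ftr_ftr: "ftr (ftr f) = ftr f"
  by (rule fls_eqI) (simp add: ftr_nth)

lemma ftr_mult_ftr: "ftr (ftr f * ftr g) = ftr f * ftr g"
proof (rule fls_eqI)
  fix k :: int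
  show "ftr (ftr f * ftr g) $$ k = (ftr f * ftr g) $$ k"
  proof (cases "k \<le> -1")
    case True then show ?thesis by (simp add: ftr_nth)
  next
    case False
    have "(ftr f * ftr g) $$ k = (\<Sum>i=fls_subdegree (ftr f)..k - fls_subdegree (ftr g). ftr f $$ i * ftr g $$ (k - i))"
      by (rule fls_times_nth(2))
    also have "\<dots> = 0"
      by (rule sum.neutral) (use False in \<open>auto simp: ftr_nth\<close>)
    finally show ?thesis using False by (simp add: ftr_nth)
  qed
qed

lemma ftr_reg_mult: "ftr ((f - ftr f) * (g - ftr g)) = 0"
proof -
  have "(f - ftr f) * (g - ftr g) = fps_to_fls (fls_regpart f * fls_regpart g)"
    by (simp add: ftr_def fls_times_fps_to_fls)
  then show ?thesis by (intro fls_eqI) (simp add: ftr_nth)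
qed


definition slc :: "'n::finite \<Rightarrow> complex^'n \<Rightarrow> complex \<Rightarrow> complex^'n" where
  "slc \<alpha> x z = (\<chi> i. if i = \<alpha> then z else x$i)"

lemma slc_self: "slc \<alpha> x (x$\<alpha>) = x"
  by (simp add: slc_def vec_eq_iff)

definition dfb :: "(complex^'n::finite \<Rightarrow> complex) \<Rightarrow> complex^'n \<Rightarrow> bool" where
  "dfb f x \<longleftrightarrow> (\<forall>\<alpha>. (\<lambda>z. f (slc \<alpha> x z)) field_differentiable (at (x$\<alpha>)))"

lemma pdx_slc: "pdx \<alpha> f x = deriv (\<lambda>z. f (slc \<alpha> x z)) (x$\<alpha>)"
  by (simp add: pdx_def slc_def)

lemma dfb_DERIV: "dfb f x \<Longrightarrow> ((\<lambda>z. f (slc \<alpha> x z)) has_field_derivative pdx \<alpha> f x) (at (x$\<alpha>))"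
  by (simp add: dfb_def pdx_slc DERIV_deriv_iff_field_differentiable)

lemma dfbI: "(\<And>\<alpha>. ((\<lambda>z. f (slc \<alpha> x z)) has_field_derivative D \<alpha>) (at (x$\<alpha>))) \<Longrightarrow> dfb f x"
  by (auto simp: dfb_def field_differentiable_def)

lemma dfb_add: "dfb f x \<Longrightarrow> dfb g x \<Longrightarrow> dfb (\<lambda>y. f y + g y) x"
  by (rule dfbI, rule DERIV_add, erule dfb_DERIV, erule dfb_DERIV)

lemma dfb_diff: "dfb f x \<Longrightarrow> dfb g x \<Longrightarrow> dfb (\<lambda>y. f y - g y) x"
  by (rule dfbI, rule DERIV_diff, erule dfb_DERIV, erule dfb_DERIV)

lemma dfb_mult: "dfb f x \<Longrightarrow> dfb g x \<Longrightarrow> dfb (\<lambda>y. f y * g y) x"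
  by (rule dfbI, rule DERIV_mult', erule dfb_DERIV, erule dfb_DERIV)

lemma dfb_const: "dfb (\<lambda>y. c) x"
  by (rule dfbI, rule DERIV_const)

lemma pdx_add: "dfb f x \<Longrightarrow> dfb g x \<Longrightarrow> pdx \<alpha> (\<lambda>y. f y + g y) x = pdx \<alpha> f x + pdx \<alpha> g x"
  unfolding pdx_slc[of \<alpha> "\<lambda>y. f y + g y"]
  by (rule DERIV_imp_deriv, rule DERIV_add, erule dfb_DERIV, erule dfb_DERIV)

lemma pdx_diff: "dfb f x \<Longrightarrow> dfb g x \<Longrightarrow> pdx \<alpha> (\<lambda>y. f y - g y) x = pdx \<alpha> f x - pdx \<alpha> g x"
  unfolding pdx_slc[of \<alpha> "\<lambda>y. f y - g y"]
  by (rule DERIV_imp_deriv, rule DERIV_diff, erule dfb_DERIV, erule dfb_DERIV)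

lemma pdx_mult: "dfb f x \<Longrightarrow> dfb g x \<Longrightarrow> pdx \<alpha> (\<lambda>y. f y * g y) x = f x * pdx \<alpha> g x + pdx \<alpha> f x * g x"
  unfolding pdx_slc[of \<alpha> "\<lambda>y. f y * g y"]
  using DERIV_imp_deriv[OF DERIV_mult'[OF dfb_DERIV[of f x \<alpha>] dfb_DERIV[of g x \<alpha>]]]
  by (simp add: slc_self)

lemma pdx_const: "pdx \<alpha> (\<lambda>y. c) x = 0"
  unfolding pdx_slc by (rule DERIV_imp_deriv, rule DERIV_const)

lemma dfb_sum: "finite S \<Longrightarrow> (\<And>i. i \<in> S \<Longrightarrow> dfb (f i) x) \<Longrightarrow> dfb (\<lambda>y. \<Sum>i\<in>S. f i y) x"
  by (induction S rule: finite_induct) (auto intro: dfb_add dfb_const)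

lemma pdx_sum: "finite S \<Longrightarrow> (\<And>i. i \<in> S \<Longrightarrow> dfb (f i) x) \<Longrightarrow>
   pdx \<alpha> (\<lambda>y. \<Sum>i\<in>S. f i y) x = (\<Sum>i\<in>S. pdx \<alpha> (f i) x)"
proof (induction S rule: finite_induct)
  case empty then show ?case by (simp add: pdx_const)
next
  case (insert a S)
  have "pdx \<alpha> (\<lambda>y. \<Sum>i\<in>insert a S. f i y) x = pdx \<alpha> (\<lambda>y. f a y + (\<Sum>i\<in>S. f i y)) x"
    using insert by simp
  also have "\<dots> = pdx \<alpha> (f a) x + pdx \<alpha> (\<lambda>y. \<Sum>i\<in>S. f i y) x"
    by (rule pdx_add) (use insert in \<open>auto intro: dfb_sum\<close>)
  finally show ?case using insert by simp
qed

lemma dist_slc: "dist (slc \<alpha> x z) x \<le> cmod (z - x$\<alpha>)"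
proof -
  have "dist (slc \<alpha> x z) x = L2_set (\<lambda>i. cmod ((slc \<alpha> x z - x)$i)) UNIV"
    by (simp add: dist_norm norm_vec_def)
  also have "\<dots> \<le> (\<Sum>i\<in>UNIV. cmod ((slc \<alpha> x z - x)$i))"
    by (rule L2_set_le_sum) simp
  also have "\<dots> = (\<Sum>i\<in>UNIV. if i = \<alpha> then cmod (z - x$\<alpha>) else 0)"
    by (rule sum.cong) (auto simp: slc_def)
  also have "\<dots> = cmod (z - x$\<alpha>)" by simp
  finally show ?thesis .
qed

lemma slc_in_ball: "z \<in> ball (x$\<alpha>) r \<Longrightarrow> slc \<alpha> x z \<in> ball x r"
  using dist_slc[of \<alpha> x z] by (simp add: dist_commute dist_norm)

lemma pdx_local:
  assumes "open U" "x \<in> U" "\<And>y. y \<in> U \<Longrightarrow> f y = g y"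
  shows "pdx \<alpha> f x = pdx \<alpha> g x"
proof -
  obtain e where e: "e > 0" "ball x e \<subseteq> U" using assms(1,2) open_contains_ball by blast
  have "eventually (\<lambda>z. f (slc \<alpha> x z) = g (slc \<alpha> x z)) (nhds (x$\<alpha>))"
  proof (rule eventually_nhds_in_open[THEN eventually_mono])
    show "open (ball (x$\<alpha>) e)" by simp
    show "x$\<alpha> \<in> ball (x$\<alpha>) e" using e by simp
  next
    fix z assume "z \<in> ball (x$\<alpha>) e"
    then have "slc \<alpha> x z \<in> U" using slc_in_ball e by blast
    then show "f (slc \<alpha> x z) = g (slc \<alpha> x z)" using assms(3) by simp
  qed
  then show ?thesis unfolding pdx_slc by (rule deriv_cong_ev) simp
qed



definition DM :: "'n::finite mfun \<Rightarrow> complex^'n \<Rightarrow> bool" where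
  "DM P x \<longleftrightarrow> (\<forall>i j. dfb (\<lambda>y. P y $ i $ j) x)"

definition DS :: "'n::finite lser \<Rightarrow> complex^'n \<Rightarrow> bool" where
  "DS A x \<longleftrightarrow> (\<forall>k. DM (A k) x)"

lemma DM_mult: assumes "DM P x" "DM Q x" shows "DM (\<lambda>y. P y ** Q y) x"
proof -
  have "dfb (\<lambda>y. \<Sum>l\<in>UNIV. P y $ i $ l * Q y $ l $ j) x" for i j
  proof (rule dfb_sum)
    fix l show "dfb (\<lambda>y. P y $ i $ l * Q y $ l $ j) x"
      using assms unfolding DM_def by (intro dfb_mult) simp_all
  qed simp
  then show ?thesis by (simp add: DM_def matrix_matrix_mult_def)
qed

lemma DM_add: "DM P x \<Longrightarrow> DM Q x \<Longrightarrow> DM (\<lambda>y. P y + Q y) x"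
  unfolding DM_def by (auto intro!: dfb_add)

lemma DM_diff: "DM P x \<Longrightarrow> DM Q x \<Longrightarrow> DM (\<lambda>y. P y - Q y) x"
  unfolding DM_def by (auto intro!: dfb_diff)

lemma DM_const: "DM (\<lambda>y. c) x"
  unfolding DM_def by (auto intro!: dfb_const)

lemma DM_sum: "finite S \<Longrightarrow> (\<And>i. i \<in> S \<Longrightarrow> DM (f i) x) \<Longrightarrow> DM (\<lambda>y. \<Sum>i\<in>S. f i y) x"
proof (induction S rule: finite_induct)
  case empty then show ?case by (simp add: DM_const)
next
  case (insert a S)
  then have "DM (\<lambda>y. f a y + (\<Sum>i\<in>S. f i y)) x" by (intro DM_add) auto
  then show ?case using insert by simp
qed

lemma mderiv_const: "mderiv \<alpha> (\<lambda>y. c) x = 0"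
  by (simp add: mderiv_def pdx_const vec_eq_iff)

lemma mderiv_add: "DM P x \<Longrightarrow> DM Q x \<Longrightarrow> mderiv \<alpha> (\<lambda>y. P y + Q y) x = mderiv \<alpha> P x + mderiv \<alpha> Q x"
  unfolding mderiv_def DM_def by (simp add: vec_eq_iff pdx_add)

lemma mderiv_diff: "DM P x \<Longrightarrow> DM Q x \<Longrightarrow> mderiv \<alpha> (\<lambda>y. P y - Q y) x = mderiv \<alpha> P x - mderiv \<alpha> Q x"
  unfolding mderiv_def DM_def by (simp add: vec_eq_iff pdx_diff)

lemma mderiv_sum: "finite S \<Longrightarrow> (\<And>i. i \<in> S \<Longrightarrow> DM (f i) x) \<Longrightarrow>
   mderiv \<alpha> (\<lambda>y. \<Sum>i\<in>S. f i y) x = (\<Sum>i\<in>S. mderiv \<alpha> (f i) x)"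
proof (induction S rule: finite_induct)
  case empty then show ?case by (simp add: mderiv_const)
next
  case (insert a S)
  have "mderiv \<alpha> (\<lambda>y. \<Sum>i\<in>insert a S. f i y) x = mderiv \<alpha> (\<lambda>y. f a y + (\<Sum>i\<in>S. f i y)) x"
    using insert by simp
  also have "\<dots> = mderiv \<alpha> (f a) x + mderiv \<alpha> (\<lambda>y. \<Sum>i\<in>S. f i y) x"
    by (rule mderiv_add) (use insert in \<open>auto intro: DM_sum\<close>)
  finally show ?case using insert by simp
qed

lemma mderiv_mult: assumes "DM P x" "DM Q x"
  shows "mderiv \<alpha> (\<lambda>y. P y ** Q y) x = mderiv \<alpha> P x ** Q x + P x ** mderiv \<alpha> Q x"
proof -
  have "pdx \<alpha> (\<lambda>y. (P y ** Q y) $ i $ j) x = (mderiv \<alpha> P x ** Q x + P x ** mderiv \<alpha> Q x) $ i $ j" for i j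
  proof -
    have dP: "dfb (\<lambda>y. P y $ i $ l) x" for i l using assms(1) by (simp add: DM_def)
    have dQ: "dfb (\<lambda>y. Q y $ i $ l) x" for i l using assms(2) by (simp add: DM_def)
    have "pdx \<alpha> (\<lambda>y. (P y ** Q y) $ i $ j) x = pdx \<alpha> (\<lambda>y. \<Sum>l\<in>UNIV. P y $ i $ l * Q y $ l $ j) x"
      by (simp add: matrix_matrix_mult_def)
    also have "\<dots> = (\<Sum>l\<in>UNIV. pdx \<alpha> (\<lambda>y. P y $ i $ l * Q y $ l $ j) x)"
      by (rule pdx_sum) (simp_all add: dfb_mult[OF dP dQ])
    also have "\<dots> = (\<Sum>l\<in>UNIV. P x $ i $ l * pdx \<alpha> (\<lambda>y. Q y $ l $ j) x + pdx \<alpha> (\<lambda>y. P y $ i $ l) x * Q x $ l $ j)"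
      by (rule sum.cong) (simp_all only: pdx_mult[OF dP dQ])
    also have "\<dots> = (\<Sum>l\<in>UNIV. pdx \<alpha> (\<lambda>y. P y $ i $ l) x * Q x $ l $ j) + (\<Sum>l\<in>UNIV. P x $ i $ l * pdx \<alpha> (\<lambda>y. Q y $ l $ j) x)"
      by (subst sum.distrib[symmetric]) (rule sum.cong, simp_all only: add.commute)
    also have "\<dots> = (mderiv \<alpha> P x ** Q x + P x ** mderiv \<alpha> Q x) $ i $ j"
      by (simp only: matrix_matrix_mult_def mderiv_def vec_lambda_beta vector_add_component)
    finally show ?thesis .
  qed
  then show ?thesis by (simp add: mderiv_def vec_eq_iff)
qed

lemma mderiv_local:
  assumes "open U" "x \<in> U" "\<And>y. y \<in> U \<Longrightarrow> P y = Q y"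
  shows "mderiv \<alpha> P x = mderiv \<alpha> Q x"
proof -
  have "pdx \<alpha> (\<lambda>y. P y $ i $ j) x = pdx \<alpha> (\<lambda>y. Q y $ i $ j) x" for i j
    by (rule pdx_local[OF assms(1,2)]) (simp add: assms(3))
  then show ?thesis unfolding mderiv_def by (simp add: vec_eq_iff)
qed



lemma bnd_ld: "bnd A a \<Longrightarrow> bnd (ld \<alpha> A) a"
proof -
  assume "bnd A a"
  then have "k < a \<Longrightarrow> A k = (\<lambda>y. 0)" for k by (auto simp: bnd_def)
  then show "bnd (ld \<alpha> A) a" by (simp add: bnd_def ld_def mderiv_const)
qed

lemma DS_lmul: assumes "bnd A a" "bnd B b" "DS A x" "DS B x" shows "DS (lmul A B) x"
  unfolding DS_def
proof
  fix k
  have "lmul A B k = (\<lambda>y. \<Sum>i=a..k-b. A i y ** B (k-i) y)"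
    using lmul_sum[OF assms(1,2)] by auto
  moreover have "DM (\<lambda>y. \<Sum>i=a..k-b. A i y ** B (k-i) y) x"
  proof (rule DM_sum)
    fix i show "DM (\<lambda>y. A i y ** B (k-i) y) x"
      by (rule DM_mult) (use assms(3,4) in \<open>simp_all add: DS_def\<close>)
  qed simp
  ultimately show "DM (lmul A B k) x" by simp
qed

lemma DS_ladd: "DS A x \<Longrightarrow> DS B x \<Longrightarrow> DS (ladd A B) x"
  unfolding DS_def ladd_def by (auto intro: DM_add)

lemma DS_lsub: "DS A x \<Longrightarrow> DS B x \<Longrightarrow> DS (lsub A B) x"
  unfolding DS_def lsub_def by (auto intro: DM_diff)

lemma DS_trunc: "DS A x \<Longrightarrow> DS (trunc A) x"
  unfolding DS_def trunc_def
proof (intro allI)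
  fix k assume "\<forall>k. DM (A k) x"
  then show "DM (\<lambda>x. if k \<le> - 1 then A k x else 0) x" by (cases "k \<le> -1") (simp_all add: DM_const)
qed

lemma DS_cser: "DS (cser b) x"
  unfolding DS_def cser_def by (auto intro: DM_const)

lemma ld_lmul: assumes "bnd A a" "bnd B b" "DS A x" "DS B x"
  shows "ld \<alpha> (lmul A B) k x = ladd (lmul (ld \<alpha> A) B) (lmul A (ld \<alpha> B)) k x"
proof -
  have "lmul A B k = (\<lambda>y. \<Sum>i=a..k-b. A i y ** B (k-i) y)"
    using lmul_sum[OF assms(1,2)] by auto
  then have "ld \<alpha> (lmul A B) k x = mderiv \<alpha> (\<lambda>y. \<Sum>i=a..k-b. A i y ** B (k-i) y) x"
    by (simp add: ld_def)
  also have "\<dots> = (\<Sum>i=a..k-b. mderiv \<alpha> (\<lambda>y. A i y ** B (k-i) y) x)"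
  proof (rule mderiv_sum)
    fix i show "DM (\<lambda>y. A i y ** B (k-i) y) x"
      by (rule DM_mult) (use assms(3,4) in \<open>simp_all add: DS_def\<close>)
  qed simp
  also have "\<dots> = (\<Sum>i=a..k-b. ld \<alpha> A i x ** B (k-i) x + A i x ** ld \<alpha> B (k-i) x)"
  proof (rule sum.cong)
    fix i show "mderiv \<alpha> (\<lambda>y. A i y ** B (k-i) y) x = ld \<alpha> A i x ** B (k-i) x + A i x ** ld \<alpha> B (k-i) x"
      unfolding ld_def by (rule mderiv_mult) (use assms(3,4) in \<open>simp_all add: DS_def\<close>)
  qed simp
  also have "\<dots> = ladd (lmul (ld \<alpha> A) B) (lmul A (ld \<alpha> B)) k x"
    by (simp add: ladd_def lmul_sum[OF bnd_ld[OF assms(1)] assms(2)] lmul_sum[OF assms(1) bnd_ld[OF assms(2)]] sum.distrib)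
  finally show ?thesis .
qed

lemma ld_ladd: assumes "DS A x" "DS B x" shows "ld \<alpha> (ladd A B) k x = ladd (ld \<alpha> A) (ld \<alpha> B) k x"
  using assms by (simp add: ld_def ladd_def DS_def mderiv_add)

lemma ld_lsub: assumes "DS A x" "DS B x" shows "ld \<alpha> (lsub A B) k x = lsub (ld \<alpha> A) (ld \<alpha> B) k x"
  using assms by (simp add: ld_def lsub_def DS_def mderiv_diff)

lemma ld_trunc: "ld \<alpha> (trunc A) = trunc (ld \<alpha> A)"
  by (auto simp: ld_def trunc_def mderiv_const fun_eq_iff)

lemma ld_local: assumes "open U" "x \<in> U" "\<And>y k. y \<in> U \<Longrightarrow> A k y = B k y"
  shows "ld \<alpha> A k x = ld \<alpha> B k x"
  unfolding ld_def by (rule mderiv_local[OF assms(1,2)]) (use assms(3) in auto)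

lemma ld_cser: "ld \<alpha> (cser b) = (\<lambda>k x. 0)"
  by (simp add: ld_def cser_def mderiv_const fun_eq_iff)

lemma ld_lone: "ld \<alpha> lone = (\<lambda>k x. 0)"
  by (auto simp: ld_def lone_def mderiv_const fun_eq_iff)

lemma FL_ld_lmul: assumes "bnd A a" "bnd B b" "DS A x" "DS B x"
  shows "FL (ld \<alpha> (lmul A B)) x = FL (ld \<alpha> A) x * FL B x + FL A x * FL (ld \<alpha> B) x"
proof -
  have "FL (ld \<alpha> (lmul A B)) x = FL (ladd (lmul (ld \<alpha> A) B) (lmul A (ld \<alpha> B))) x"
    by (rule FL_cong) (rule ld_lmul[OF assms])
  also have "\<dots> = FL (ld \<alpha> A) x * FL B x + FL A x * FL (ld \<alpha> B) x"
    using FL_ladd[OF bnd_lmul[OF bnd_ld[OF assms(1)] assms(2)] bnd_lmul[OF assms(1) bnd_ld[OF assms(2)]]]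
      FL_lmul[OF bnd_ld[OF assms(1)] assms(2)] FL_lmul[OF assms(1) bnd_ld[OF assms(2)]]
    by simp
  finally show ?thesis .
qed

lemma FL_ld_ladd: assumes "bnd A a" "bnd B b" "DS A x" "DS B x"
  shows "FL (ld \<alpha> (ladd A B)) x = FL (ld \<alpha> A) x + FL (ld \<alpha> B) x"
proof -
  have "FL (ld \<alpha> (ladd A B)) x = FL (ladd (ld \<alpha> A) (ld \<alpha> B)) x"
    by (rule FL_cong) (rule ld_ladd[OF assms(3,4)])
  then show ?thesis using FL_ladd[OF bnd_ld[OF assms(1)] bnd_ld[OF assms(2)]] by simp
qed

lemma FL_ld_lsub: assumes "bnd A a" "bnd B b" "DS A x" "DS B x"
  shows "FL (ld \<alpha> (lsub A B)) x = FL (ld \<alpha> A) x - FL (ld \<alpha> B) x"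
proof -
  have "FL (ld \<alpha> (lsub A B)) x = FL (lsub (ld \<alpha> A) (ld \<alpha> B)) x"
    by (rule FL_cong) (rule ld_lsub[OF assms(3,4)])
  then show ?thesis using FL_lsub[OF bnd_ld[OF assms(1)] bnd_ld[OF assms(2)]] by simp
qed

lemma FL_ld_local: assumes "open U" "x \<in> U" "\<And>y k. y \<in> U \<Longrightarrow> A k y = B k y"
  shows "FL (ld \<alpha> A) x = FL (ld \<alpha> B) x"
  by (rule FL_cong) (rule ld_local[OF assms])


lemma analytic_dfb:
  assumes "mv_analytic_on f U" "x \<in> U"
  shows "dfb f x"
  unfolding dfb_def
proof
  fix \<alpha> :: 'a
  obtain r a where r: "r > 0" and hs: "\<And>y. y \<in> ball x r \<Longrightarrow>
      ((\<lambda>k. a k * (\<Prod>i\<in>UNIV. (y$i - x$i) ^ k i)) has_sum f y) UNIV"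
    using assms unfolding mv_analytic_on_def by blast
  define e :: "nat \<Rightarrow> 'a \<Rightarrow> nat" where "e n = (\<lambda>i. if i = \<alpha> then n else 0)" for n
  define c where "c n = a (e n)" for n
  have inj: "inj e" unfolding e_def inj_def by (metis (full_types))
  have sums: "(\<lambda>n. c n * w ^ n) sums f (slc \<alpha> x (x$\<alpha> + w))" if w: "cmod w < r" for w
  proof -
    let ?y = "slc \<alpha> x (x$\<alpha> + w)"
    have yb: "?y \<in> ball x r" by (rule slc_in_ball) (use w in \<open>simp add: dist_norm\<close>)
    let ?g = "\<lambda>k. a k * (\<Prod>i\<in>UNIV. (?y$i - x$i) ^ k i)"
    have comp: "?y$i - x$i = (if i = \<alpha> then w else 0)" for i by (simp add: slc_def)
    have "(?g has_sum f ?y) UNIV" using hs[OF yb] .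
    then have "(?g has_sum f ?y) (range e)"
    proof (rule has_sum_cong_neutral[THEN iffD1, rotated -1])
      fix k assume "k \<in> UNIV - range e"
      then have "k \<noteq> e (k \<alpha>)" by auto
      then obtain i where "k i \<noteq> e (k \<alpha>) i" by auto
      then have "i \<noteq> \<alpha>" "k i \<noteq> 0" by (auto simp: e_def split: if_splits)
      then have "(?y$i - x$i) ^ k i = 0" by (simp add: comp)
      then have "(\<Prod>i\<in>UNIV. (?y$i - x$i) ^ k i) = 0" by (meson UNIV_I finite prod_zero)
      then show "?g k = 0" by simp
    qed auto
    then have "((?g \<circ> e) has_sum f ?y) UNIV" by (simp add: has_sum_reindex[OF inj])
    moreover have "(?g \<circ> e) n = c n * w ^ n" for n
    proof -
      have "(\<Prod>i\<in>UNIV. (?y$i - x$i) ^ e n i) = (\<Prod>i\<in>UNIV. if i = \<alpha> then w ^ n else 1)"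
        by (rule prod.cong) (auto simp: comp e_def)
      also have "\<dots> = w ^ n" by simp
      finally show ?thesis by (simp add: c_def)
    qed
    ultimately have "((\<lambda>n. c n * w ^ n) has_sum f ?y) UNIV" by (simp add: comp_def)
    then show ?thesis by (rule has_sum_imp_sums)
  qed
  define K :: complex where "K = of_real (r/2)"
  have "summable (\<lambda>n. c n * K ^ n)" using sums[of K] r by (auto simp: K_def sums_summable)
  then have d0: "DERIV (\<lambda>w. \<Sum>n. c n * w ^ n) 0 :> (\<Sum>n. diffs c n * 0 ^ n)"
    by (rule termdiffs_strong) (use r in \<open>simp add: K_def\<close>)
  define D where "D = (\<Sum>n. diffs c n * (0::complex) ^ n)"
  have "DERIV (\<lambda>w. \<Sum>n. c n * w ^ n) (x$\<alpha> - x$\<alpha>) :> D" using d0 by (simp add: D_def)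
  then have "DERIV (\<lambda>z. \<Sum>n. c n * (z - x$\<alpha>) ^ n) (x$\<alpha>) :> D * 1"
    by (rule DERIV_chain2) (auto intro!: derivative_eq_intros)
  then have "DERIV (\<lambda>z. f (slc \<alpha> x z)) (x$\<alpha>) :> D * 1"
  proof (rule has_field_derivative_transform_within_open)
    show "open (ball (x$\<alpha>) r)" by simp
    show "x$\<alpha> \<in> ball (x$\<alpha>) r" using r by simp
    fix z assume "z \<in> ball (x$\<alpha>) r"
    then have "cmod (z - x$\<alpha>) < r" by (simp add: dist_norm norm_minus_commute)
    from sums_unique[OF sums[OF this]] show "(\<Sum>n. c n * (z - x$\<alpha>) ^ n) = f (slc \<alpha> x z)" by simp
  qed
  then show "(\<lambda>z. f (slc \<alpha> x z)) field_differentiable at (x$\<alpha>)"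
    by (auto simp: field_differentiable_def)
qed


definition bb :: "'n::finite lser \<Rightarrow> bool" where "bb A \<longleftrightarrow> (\<exists>N. bnd A N)"

lemma bb_lmul[simp]: "bb A \<Longrightarrow> bb B \<Longrightarrow> bb (lmul A B)"
  unfolding bb_def using bnd_lmul by blast
lemma bb_ladd[simp]: "bb A \<Longrightarrow> bb B \<Longrightarrow> bb (ladd A B)"
  unfolding bb_def using bnd_ladd by blast
lemma bb_lsub[simp]: "bb A \<Longrightarrow> bb B \<Longrightarrow> bb (lsub A B)"
  unfolding bb_def using bnd_lsub by blast
lemma bb_trunc[simp]: "bb A \<Longrightarrow> bb (trunc A)"
  unfolding bb_def using bnd_trunc by blast
lemma bb_ld[simp]: "bb A \<Longrightarrow> bb (ld \<alpha> A)"
  unfolding bb_def using bnd_ld by blast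
lemma bb_lone[simp]: "bb lone"
  unfolding bb_def using bnd_lone by blast
lemma bb_zero[simp]: "bb (\<lambda>k x. 0)"
  unfolding bb_def using bnd_zero by blast
lemma bb_Lpot[simp]: "bb (Lpot C \<alpha>)"
  unfolding bb_def bnd_def Lpot_def by (rule exI[of _ "-1"]) auto
lemma bb_cser: "diag_laurent b \<Longrightarrow> bb (cser b)"
  unfolding bb_def bnd_def diag_laurent_def cser_def by auto
lemma bb_power_ser: "power_ser U A \<Longrightarrow> bb A"
  unfolding bb_def bnd_def power_ser_def by (rule exI[of _ 0]) auto

lemma FL_lmul'[simp]: "bb A \<Longrightarrow> bb B \<Longrightarrow> FL (lmul A B) x = FL A x * FL B x"
  unfolding bb_def using FL_lmul by blast
lemma FL_ladd'[simp]: "bb A \<Longrightarrow> bb B \<Longrightarrow> FL (ladd A B) x = FL A x + FL B x"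
  unfolding bb_def using FL_ladd by blast
lemma FL_lsub'[simp]: "bb A \<Longrightarrow> bb B \<Longrightarrow> FL (lsub A B) x = FL A x - FL B x"
  unfolding bb_def using FL_lsub by blast
lemma FL_trunc'[simp]: "bb A \<Longrightarrow> FL (trunc A) x = ftr (FL A x)"
  unfolding bb_def using FL_trunc by blast
lemma FL_lbr[simp]: "bb A \<Longrightarrow> bb B \<Longrightarrow> FL (lbr A B) x = FL A x * FL B x - FL B x * FL A x"
  unfolding lbr_def by simp
lemma FL_zero'[simp]: "FL (\<lambda>k x. 0) x = 0"
  by (rule FL_zero)
lemma FL_lone'[simp]: "FL lone x = 1"
  by (rule FL_lone)

lemma DS_lmul'[simp]: "bb A \<Longrightarrow> bb B \<Longrightarrow> DS A x \<Longrightarrow> DS B x \<Longrightarrow> DS (lmul A B) x"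
  unfolding bb_def using DS_lmul by blast
lemma DS_ladd'[simp]: "DS A x \<Longrightarrow> DS B x \<Longrightarrow> DS (ladd A B) x" by (rule DS_ladd)
lemma DS_lsub'[simp]: "DS A x \<Longrightarrow> DS B x \<Longrightarrow> DS (lsub A B) x" by (rule DS_lsub)
lemma DS_trunc'[simp]: "DS A x \<Longrightarrow> DS (trunc A) x" by (rule DS_trunc)
lemma DS_cser'[simp]: "DS (cser b) x" by (rule DS_cser)

lemma FL_ld_lmul'[simp]: "bb A \<Longrightarrow> bb B \<Longrightarrow> DS A x \<Longrightarrow> DS B x \<Longrightarrow>
   FL (ld \<alpha> (lmul A B)) x = FL (ld \<alpha> A) x * FL B x + FL A x * FL (ld \<alpha> B) x"
  unfolding bb_def using FL_ld_lmul by blast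
lemma FL_ld_ladd'[simp]: "bb A \<Longrightarrow> bb B \<Longrightarrow> DS A x \<Longrightarrow> DS B x \<Longrightarrow>
   FL (ld \<alpha> (ladd A B)) x = FL (ld \<alpha> A) x + FL (ld \<alpha> B) x"
  unfolding bb_def using FL_ld_ladd by blast
lemma FL_ld_lsub'[simp]: "bb A \<Longrightarrow> bb B \<Longrightarrow> DS A x \<Longrightarrow> DS B x \<Longrightarrow>
   FL (ld \<alpha> (lsub A B)) x = FL (ld \<alpha> A) x - FL (ld \<alpha> B) x"
  unfolding bb_def using FL_ld_lsub by blast
lemma FL_ld_lbr[simp]: "bb A \<Longrightarrow> bb B \<Longrightarrow> DS A x \<Longrightarrow> DS B x \<Longrightarrow>
   FL (ld \<alpha> (lbr A B)) x = (FL (ld \<alpha> A) x * FL B x + FL A x * FL (ld \<alpha> B) x)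
      - (FL (ld \<alpha> B) x * FL A x + FL B x * FL (ld \<alpha> A) x)"
  unfolding lbr_def by simp

lemma FL_inj': "bb A \<Longrightarrow> bb B \<Longrightarrow> FL A x = FL B x \<Longrightarrow> A k x = B k x"
  unfolding bb_def using FL_inj by blast

declare ld_trunc[simp] ld_cser[simp] ld_lone[simp]

lemma isdiag_comm: "isdiag A \<Longrightarrow> isdiag B \<Longrightarrow> A ** B = B ** A"
proof -
  assume a: "isdiag A" "isdiag B"
  have "(A ** B) $ i $ j = (if i = j then A $ i $ i * B $ i $ i else 0)"
    if "isdiag A" "isdiag B" for A B :: "complex^'n^'n" and i j
  proof -
    have "(A ** B) $ i $ j = (\<Sum>l\<in>UNIV. A $ i $ l * B $ l $ j)"
      by (simp add: matrix_matrix_mult_def)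
    also have "\<dots> = (\<Sum>l\<in>UNIV. if l = i then A $ i $ l * B $ l $ j else 0)"
      by (rule sum.cong) (use that in \<open>auto simp: isdiag_def\<close>)
    also have "\<dots> = A $ i $ i * B $ i $ j" by simp
    finally show ?thesis using that by (auto simp: isdiag_def)
  qed
  from this[OF a] this[OF a(2,1)] show ?thesis by (simp add: vec_eq_iff mult.commute)
qed

lemma lmul_sum':
  assumes "bnd A a" "bnd B b"
  shows "lmul A B k x = (\<Sum>l=b..k-a. A (k-l) x ** B l x)"
proof -
  have "lmul A B k x = (\<Sum>i=a..k-b. A i x ** B (k-i) x)" by (rule lmul_sum[OF assms])
  also have "\<dots> = (\<Sum>l=b..k-a. A (k-l) x ** B l x)"
    by (rule sum.reindex_bij_witness[of _ "\<lambda>l. k - l" "\<lambda>i. k - i"]) auto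
  finally show ?thesis .
qed

lemma FL_comm_diag:
  assumes "bb A" "bb B" "\<And>k. isdiag (A k x)" "\<And>k. isdiag (B k x)"
  shows "FL A x * FL B x = FL B x * FL A x"
proof -
  obtain a b where ab: "bnd A a" "bnd B b" using assms(1,2) by (auto simp: bb_def)
  have "lmul A B k x = lmul B A k x" for k
    unfolding lmul_sum[OF ab] lmul_sum'[OF ab(2,1)]
    by (rule sum.cong) (auto intro: isdiag_comm assms)
  then have "FL (lmul A B) x = FL (lmul B A) x" by (rule FL_cong)
  then show ?thesis using assms by simp
qed


lemma ring_id_varh:
  fixes t ti t' ti' dt dt' a n n' :: "'a::ring_1"
  assumes r: "t * ti = 1" and l: "ti * t = 1" and d: "ti' = - (ti * t' * ti)"
  shows "(0 - ti * dt * ti * t') + ti * dt' + (0 - ti * dt * ti * a * t) + ti * ((0 - n') + (n * a - a * n)) * t + ti * a * dt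
    = ((ti * t' + ti * (a * t)) * (ti * dt - ti * (n * t)) - (ti * dt - ti * (n * t)) * (ti * t' + ti * (a * t)))
      + ((ti' * dt + ti * dt') - (ti' * (n * t) + ti * (n' * t + n * t')))"
proof -
  have r': "t * (ti * z) = z" for z by (simp add: mult.assoc[symmetric] r)
  have l': "ti * (t * z) = z" for z by (simp add: mult.assoc[symmetric] l)
  show ?thesis unfolding d by (simp add: algebra_simps r l r' l')
qed


lemma ftr_simps: "ftr (f + g) = ftr f + ftr g" "ftr (f - g) = ftr f - ftr g" "ftr (- f) = - ftr f" "ftr 0 = 0"
  by (simp_all add: ftr_add ftr_diff ftr_uminus ftr_0)

lemma diff3_0: "x - y - z = (0::'a::ab_group_add) \<Longrightarrow> x = y + z"
  by (simp add: algebra_simps)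

lemma final_alg:
  fixes m1 m2 d1 d2 a :: "'a::ring_1 fls"
  assumes comm: "m1 * m2 = m2 * m1" and dcomm: "d1 * m2 + m1 * d2 = d2 * m1 + m2 * d1"
  defines "n1 \<equiv> ftr m1" and "n2 \<equiv> ftr m2" and "e1 \<equiv> ftr d1" and "e2 \<equiv> ftr d2"
  shows "(0 - ftr ((e1 * m2 + n1 * d2) - (d2 * n1 + m2 * e1)) + (ftr (n1 * m2 - m2 * n1) * a - a * ftr (n1 * m2 - m2 * n1)))
          + (n2 * ((0 - e1) + (n1 * a - a * n1)) - ((0 - e1) + (n1 * a - a * n1)) * n2)
       = (0 - ftr ((e2 * m1 + n2 * d1) - (d1 * n2 + m1 * e2)) + (ftr (n2 * m1 - m1 * n2) * a - a * ftr (n2 * m1 - m1 * n2)))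
          + (n1 * ((0 - e2) + (n2 * a - a * n2)) - ((0 - e2) + (n2 * a - a * n2)) * n1)"
proof -
  define p1 where "p1 = m1 - n1"
  define p2 where "p2 = m2 - n2"
  define q1 where "q1 = d1 - e1"
  define q2 where "q2 = d2 - e2"
  have m1: "m1 = n1 + p1" and m2: "m2 = n2 + p2" and d1: "d1 = e1 + q1" and d2: "d2 = e2 + q2"
    by (simp_all add: p1_def p2_def q1_def q2_def)
  have nn: "ftr (u * v) = u * v" if "u \<in> {n1, n2, e1, e2}" "v \<in> {n1, n2, e1, e2}" for u v
    using that by (auto simp: n1_def n2_def e1_def e2_def ftr_mult_ftr)
  have pp: "ftr (u * v) = 0" if "u \<in> {p1, p2, q1, q2}" "v \<in> {p1, p2, q1, q2}" for u v
    using that by (auto simp: p1_def p2_def q1_def q2_def n1_def n2_def e1_def e2_def ftr_reg_mult)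
  note nns = nn[of n1 n1] nn[of n1 n2] nn[of n2 n1] nn[of n2 n2] nn[of n1 e2] nn[of e2 n1] nn[of n2 e1] nn[of e1 n2]
    nn[of n1 e1] nn[of e1 n1] nn[of n2 e2] nn[of e2 n2]
  note pps = pp[of p1 p2] pp[of p2 p1] pp[of p1 p1] pp[of p2 p2] pp[of q1 p2] pp[of p2 q1] pp[of q2 p1] pp[of p1 q2]
  have C0: "ftr (m1 * m2 - m2 * m1) = 0" using comm by (simp add: ftr_0)
  then have C1: "n1 * n2 - n2 * n1 + (ftr (n1 * p2) + ftr (p1 * n2) - ftr (n2 * p1) - ftr (p2 * n1)) = 0"
    unfolding m1 m2 by (simp add: algebra_simps ftr_simps nns pps)
  have D0: "ftr (d1 * m2 + m1 * d2 - (d2 * m1 + m2 * d1)) = 0" using dcomm by (simp add: ftr_0)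
  then have D1: "e1 * n2 + n1 * e2 - e2 * n1 - n2 * e1 + (ftr (e1 * p2) + ftr (q1 * n2) + ftr (n1 * q2) + ftr (p1 * e2)
      - ftr (e2 * p1) - ftr (q2 * n1) - ftr (n2 * q1) - ftr (p2 * e1)) = 0"
    unfolding m1 m2 d1 d2 by (simp add: algebra_simps ftr_simps nns pps)
  have S1: "ftr (n1 * m2 - m2 * n1) = ftr (n2 * m1 - m1 * n2) + (n1 * n2 - n2 * n1)"
  proof -
    have "ftr (n1 * m2 - m2 * n1) - ftr (n2 * m1 - m1 * n2) - (n1 * n2 - n2 * n1)
       = n1 * n2 - n2 * n1 + (ftr (n1 * p2) + ftr (p1 * n2) - ftr (n2 * p1) - ftr (p2 * n1))"
      unfolding m1 m2 by (simp add: algebra_simps ftr_simps nns pps)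
    then show ?thesis unfolding C1 by (rule diff3_0)
  qed
  have S2: "ftr ((e1 * m2 + n1 * d2) - (d2 * n1 + m2 * e1)) = ftr ((e2 * m1 + n2 * d1) - (d1 * n2 + m1 * e2))
      + ((e1 * n2 - n2 * e1) + (n1 * e2 - e2 * n1))"
  proof -
    have "ftr ((e1 * m2 + n1 * d2) - (d2 * n1 + m2 * e1)) - ftr ((e2 * m1 + n2 * d1) - (d1 * n2 + m1 * e2))
      - ((e1 * n2 - n2 * e1) + (n1 * e2 - e2 * n1))
      = e1 * n2 + n1 * e2 - e2 * n1 - n2 * e1 + (ftr (e1 * p2) + ftr (q1 * n2) + ftr (n1 * q2) + ftr (p1 * e2)
      - ftr (e2 * p1) - ftr (q2 * n1) - ftr (n2 * q1) - ftr (p2 * e1))"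
      unfolding m1 m2 d1 d2 by (simp add: algebra_simps ftr_simps nns pps)
    then show ?thesis unfolding D1 by (rule diff3_0)
  qed
  show ?thesis unfolding S1 S2 by (simp add: algebra_simps)
qed


lemma ld_zero[simp]: "ld \<alpha> (\<lambda>k x. 0) = (\<lambda>k x. 0)"
  by (simp add: ld_def mderiv_const fun_eq_iff)

lemma bb_lbr[simp]: "bb A \<Longrightarrow> bb B \<Longrightarrow> bb (lbr A B)"
  unfolding lbr_def by simp

lemma DS_lbr[simp]: "bb A \<Longrightarrow> bb B \<Longrightarrow> DS A x \<Longrightarrow> DS B x \<Longrightarrow> DS (lbr A B) x"
  unfolding lbr_def by simp

lemma DS_power_ser: "power_ser U A \<Longrightarrow> x \<in> U \<Longrightarrow> DS A x"
  unfolding DS_def DM_def power_ser_def ser_analytic_def using analytic_dfb by blast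

lemma cancel_r: "t * ti = (1::'a::ring_1) \<Longrightarrow> t * (ti * z) = z"
  by (simp add: mult.assoc[symmetric])

lemma diag_mult_left: "isdiag A \<Longrightarrow> (A ** B) $ i $ j = A $ i $ i * B $ i $ j"
proof -
  assume a: "isdiag A"
  have "(A ** B) $ i $ j = (\<Sum>l\<in>UNIV. A $ i $ l * B $ l $ j)" by (simp add: matrix_matrix_mult_def)
  also have "\<dots> = (\<Sum>l\<in>UNIV. if l = i then A $ i $ l * B $ l $ j else 0)"
    by (rule sum.cong) (use a in \<open>auto simp: isdiag_def\<close>)
  finally show ?thesis by simp
qed

lemma diag_mult_right: "isdiag B \<Longrightarrow> (A ** B) $ i $ j = A $ i $ j * B $ j $ j"
proof -
  assume a: "isdiag B"
  have "(A ** B) $ i $ j = (\<Sum>l\<in>UNIV. A $ i $ l * B $ l $ j)" by (simp add: matrix_matrix_mult_def)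
  also have "\<dots> = (\<Sum>l\<in>UNIV. if l = j then A $ i $ l * B $ l $ j else 0)"
    by (rule sum.cong) (use a in \<open>auto simp: isdiag_def\<close>)
  finally show ?thesis by simp
qed

context
  fixes U :: "(complex^'n::finite) set" and C :: "'n \<Rightarrow> 'n mfun" and T Ti :: "'n lser"
  assumes U: "open U" and dr: "dressing U C T Ti"
begin

lemma psT: "power_ser U T" and psTi: "power_ser U Ti"
  using dr by (auto simp: dressing_def)

lemma bbT[simp]: "bb T" and bbTi[simp]: "bb Ti"
  using bb_power_ser psT psTi by blast+

lemma DST: "x \<in> U \<Longrightarrow> DS T x" and DSTi: "x \<in> U \<Longrightarrow> DS Ti x"
  using DS_power_ser psT psTi by blast+

lemma TTi: "x \<in> U \<Longrightarrow> FL T x * FL Ti x = 1"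
proof -
  assume x: "x \<in> U"
  have "FL (lmul T Ti) x = FL lone x" by (rule FL_cong) (use dr x in \<open>auto simp: dressing_def\<close>)
  then show ?thesis by simp
qed

lemma TiT: "x \<in> U \<Longrightarrow> FL Ti x * FL T x = 1"
proof -
  assume x: "x \<in> U"
  have "FL (lmul Ti T) x = FL lone x" by (rule FL_cong) (use dr x in \<open>auto simp: dressing_def\<close>)
  then show ?thesis by simp
qed

lemma dTi: "x \<in> U \<Longrightarrow> FL (ld \<alpha> Ti) x = - (FL Ti x * FL (ld \<alpha> T) x * FL Ti x)"
proof -
  assume x: "x \<in> U"
  have "FL (ld \<alpha> (lmul Ti T)) x = FL (ld \<alpha> lone) x"
    by (rule FL_ld_local[OF U x]) (use dr in \<open>auto simp: dressing_def\<close>)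
  then have e: "FL (ld \<alpha> Ti) x * FL T x = - (FL Ti x * FL (ld \<alpha> T) x)"
    using DST[OF x] DSTi[OF x] by (simp add: eq_neg_iff_add_eq_0)
  have "FL (ld \<alpha> Ti) x = FL (ld \<alpha> Ti) x * FL T x * FL Ti x"
    using TTi[OF x] by (simp add: mult.assoc)
  also have "\<dots> = - (FL Ti x * FL (ld \<alpha> T) x * FL Ti x)" by (simp add: e)
  finally show ?thesis .
qed

lemma X_ident:
  assumes M: "bb M" "DS M x" and dT: "power_ser U dT" and x: "x \<in> U"
  shows "var_h C T Ti dT (flowL C M) \<alpha> k x =
    ladd (lsub (lmul (hser C T Ti \<alpha>) (lsub (lmul Ti dT) (lmul Ti (lmul (trunc M) T))))
               (lmul (lsub (lmul Ti dT) (lmul Ti (lmul (trunc M) T))) (hser C T Ti \<alpha>)))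
         (ld \<alpha> (lsub (lmul Ti dT) (lmul Ti (lmul (trunc M) T)))) k x"
proof -
  have bdT[simp]: "bb dT" using bb_power_ser[OF dT] .
  have DdT[simp]: "DS dT x" using DS_power_ser[OF dT x] .
  have [simp]: "DS T x" "DS Ti x" using DST[OF x] DSTi[OF x] .
  have [simp]: "bb M" "DS M x" using M .
  have r: "FL T x * FL Ti x = 1" and l: "FL Ti x * FL T x = 1" using TTi[OF x] TiT[OF x] .
  have r': "FL T x * (FL Ti x * z) = z" for z using cancel_r[OF r] .
  have l': "FL Ti x * (FL T x * z) = z" for z using cancel_r[OF l] .
  show ?thesis
  proof (rule FL_inj')
    show "bb (var_h C T Ti dT (flowL C M) \<alpha>)" by (simp add: var_h_def flowL_def lbr_def)
    show "bb (ladd (lsub (lmul (hser C T Ti \<alpha>) (lsub (lmul Ti dT) (lmul Ti (lmul (trunc M) T))))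
               (lmul (lsub (lmul Ti dT) (lmul Ti (lmul (trunc M) T))) (hser C T Ti \<alpha>)))
         (ld \<alpha> (lsub (lmul Ti dT) (lmul Ti (lmul (trunc M) T)))))" by (simp add: hser_def)
    show "FL (var_h C T Ti dT (flowL C M) \<alpha>) x = FL (ladd (lsub (lmul (hser C T Ti \<alpha>) (lsub (lmul Ti dT) (lmul Ti (lmul (trunc M) T))))
               (lmul (lsub (lmul Ti dT) (lmul Ti (lmul (trunc M) T))) (hser C T Ti \<alpha>)))
         (ld \<alpha> (lsub (lmul Ti dT) (lmul Ti (lmul (trunc M) T))))) x"
      apply (simp add: var_h_def flowL_def hser_def dTi[OF x])
      apply (simp add: algebra_simps r l r' l')
      done
  qed
qed

lemma X_diag:
  assumes ls: "leading_span U C T Ti" and M: "bb M" "\<And>x. x \<in> U \<Longrightarrow> DS M x" and dT: "power_ser U dT"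
    and dv: "\<And>\<alpha>. in_hdiag U (var_h C T Ti dT (flowL C M) \<alpha>)"
    and x0: "x0 \<in> U"
  shows "isdiag (lsub (lmul Ti dT) (lmul Ti (lmul (trunc M) T)) k0 x0)"
proof -
  define X where "X = lsub (lmul Ti dT) (lmul Ti (lmul (trunc M) T))"
  have bbX: "bb X" by (simp add: X_def bb_power_ser[OF dT] M)
  obtain K where K: "bnd X K" using bbX bb_def by blast
  define h where "h \<alpha> = hser C T Ti \<alpha>" for \<alpha>
  have hd: "in_hdiag U (h \<alpha>)" for \<alpha> using dr by (simp add: dressing_def h_def)
  have bbh: "bb (h \<alpha>)" for \<alpha> by (simp add: h_def hser_def)
  have ident: "var_h C T Ti dT (flowL C M) \<alpha> k x = ladd (lsub (lmul (h \<alpha>) X) (lmul X (h \<alpha>))) (ld \<alpha> X) k x"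
    if "x \<in> U" for x \<alpha> k
    using X_ident[OF M(1) M(2)[OF that] dT that] by (simp add: X_def h_def)
  have main: "\<forall>x\<in>U. \<forall>k < K + int m. isdiag (X k x)" for m
  proof (induction m)
    case 0 then show ?case using K by (auto simp: bnd_def isdiag_def)
  next
    case (Suc m)
    have new: "isdiag (X (K + int m) x)" if x: "x \<in> U" for x
      unfolding isdiag_def
    proof (intro allI impI)
      fix i j :: 'n assume ij: "i \<noteq> j"
      let ?k = "K + int m"
      have key: "(h \<alpha> (-1) x $ i $ i - h \<alpha> (-1) x $ j $ j) * X ?k x $ i $ j = 0" for \<alpha>
      proof -
        obtain H0 where H0: "bnd (h \<alpha>) H0" using bbh bb_def by blast
        define H where "H = min H0 (-1)"
        have H: "bnd (h \<alpha>) H" using bnd_mono[OF H0] by (simp add: H_def)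
        have Hle: "H \<le> -1" by (simp add: H_def)
        have hx: "h \<alpha> l x = 0" if "l < -1" for l using hd[of \<alpha>] x that by (simp add: in_hdiag_def)
        have hdiag: "isdiag (h \<alpha> l x)" for l using hd[of \<alpha>] x by (simp add: in_hdiag_def)
        have Xd: "isdiag (X l y)" if "y \<in> U" "l < ?k" for l y using Suc.IH that by blast
        have v0: "var_h C T Ti dT (flowL C M) \<alpha> (?k - 1) x $ i $ j = 0"
          using dv[of \<alpha>] x ij by (simp add: in_hdiag_def isdiag_def)
        have d0: "ld \<alpha> X (?k - 1) x $ i $ j = 0"
        proof -
          have "ld \<alpha> X (?k - 1) x $ i $ j = pdx \<alpha> (\<lambda>y. X (?k - 1) y $ i $ j) x" by (simp add: ld_def mderiv_def)
          also have "\<dots> = pdx \<alpha> (\<lambda>y. 0) x"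
            by (rule pdx_local[OF U x]) (use Xd ij in \<open>auto simp: isdiag_def\<close>)
          finally show ?thesis by (simp add: pdx_const)
        qed
        have e1: "(h \<alpha> l x ** X p x) $ i $ j = h \<alpha> l x $ i $ i * X p x $ i $ j" for l p
          using diag_mult_left[OF hdiag] .
        have e2: "(X p x ** h \<alpha> l x) $ i $ j = X p x $ i $ j * h \<alpha> l x $ j $ j" for l p
          using diag_mult_right[OF hdiag] .
        have entry: "lsub (lmul (h \<alpha>) X) (lmul X (h \<alpha>)) (?k - 1) x $ i $ j
             = (\<Sum>l=H..?k-1-K. (h \<alpha> l x $ i $ i - h \<alpha> l x $ j $ j) * X (?k-1-l) x $ i $ j)"
          unfolding lsub_def lmul_sum[OF H K] lmul_sum'[OF K H]
          by (simp add: e1 e2 sum_subtractf[symmetric] algebra_simps)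
        also have "\<dots> = (h \<alpha> (-1) x $ i $ i - h \<alpha> (-1) x $ j $ j) * X (?k-1-(-1)) x $ i $ j"
        proof -
          have mem: "-1 \<in> {H..?k-1-K}" using Hle by auto
          have z: "\<forall>l\<in>{H..?k-1-K} - {-1}. (h \<alpha> l x $ i $ i - h \<alpha> l x $ j $ j) * X (?k-1-l) x $ i $ j = 0"
          proof
            fix l assume "l \<in> {H..?k-1-K} - {-1}"
            then have "l < -1 \<or> ?k-1-l < ?k" by auto
            then show "(h \<alpha> l x $ i $ i - h \<alpha> l x $ j $ j) * X (?k-1-l) x $ i $ j = 0"
            proof
              assume "l < -1" then show ?thesis by (simp add: hx)
            next
              assume "?k-1-l < ?k" then have "isdiag (X (?k-1-l) x)" using Xd x by blast
              then show ?thesis using ij by (simp add: isdiag_def)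
            qed
          qed
          show ?thesis
            unfolding sum.remove[OF finite_atLeastAtMost_int mem] sum.neutral[OF z] by simp
        qed
        finally have "lsub (lmul (h \<alpha>) X) (lmul X (h \<alpha>)) (?k - 1) x $ i $ j = (h \<alpha> (-1) x $ i $ i - h \<alpha> (-1) x $ j $ j) * X ?k x $ i $ j"
          by simp
        moreover have "var_h C T Ti dT (flowL C M) \<alpha> (?k - 1) x $ i $ j
           = lsub (lmul (h \<alpha>) X) (lmul X (h \<alpha>)) (?k - 1) x $ i $ j + ld \<alpha> X (?k - 1) x $ i $ j"
          using ident[OF x, of \<alpha> "?k - 1"] by (simp add: ladd_def)
        ultimately show ?thesis using v0 d0 by simp
      qed
      show "X ?k x $ i $ j = 0"
      proof (rule ccontr)
        assume nz: "X ?k x $ i $ j \<noteq> 0"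
        then have eq: "h \<alpha> (-1) x $ i $ i = h \<alpha> (-1) x $ j $ j" for \<alpha> using key[of \<alpha>] by simp
        define D :: "complex^'n^'n" where "D = (\<chi> p q. if p = i \<and> q = i then 1 else 0)"
        have "isdiag D" by (simp add: D_def isdiag_def)
        then obtain c where c: "D = (\<chi> p q. \<Sum>\<alpha>\<in>UNIV. c \<alpha> * hser C T Ti \<alpha> (-1) x $ p $ q)"
          using ls x unfolding leading_span_def by blast
        have "D $ i $ i = D $ j $ j" using eq unfolding c by (simp add: h_def)
        then show False using ij by (simp add: D_def)
      qed
    qed
    show ?case
    proof (intro ballI allI impI)
      fix x k assume "x \<in> U" "k < K + int (Suc m)"
      then have "k < K + int m \<or> k = K + int m" by auto
      then show "isdiag (X k x)" using Suc.IH new \<open>x \<in> U\<close> by blast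
    qed
  qed
  have "k0 < K + int (nat (k0 - K + 1))" by simp
  then show ?thesis using main x0 unfolding X_def by blast
qed

end


lemma vm_alg:
  fixes t ti dt n cb xx :: "'a::ring_1"
  assumes r: "t * ti = 1" and l: "ti * t = 1" and xx: "xx = ti * dt - ti * (n * t)" and c: "xx * cb = cb * xx"
  shows "dt * cb * ti - t * cb * ti * dt * ti = n * (t * cb * ti) - t * cb * ti * n"
proof -
  have r': "t * (ti * z) = z" for z using cancel_r[OF r] .
  have l': "ti * (t * z) = z" for z using cancel_r[OF l] .
  have "t * xx = dt - n * t" unfolding xx by (simp add: algebra_simps r' l')
  then have dt: "dt = t * xx + n * t" by (simp add: algebra_simps)
  have "dt * cb * ti - t * cb * ti * dt * ti - (n * (t * cb * ti) - t * cb * ti * n) = t * (xx * cb - cb * xx) * ti"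
    unfolding dt by (simp add: algebra_simps r' l' r l)
  then show ?thesis using c by simp
qed

lemma bb_Mser[simp]: "bb T \<Longrightarrow> bb Ti \<Longrightarrow> diag_laurent b \<Longrightarrow> bb (Mser T Ti b)"
  unfolding Mser_def by (simp add: bb_cser)

lemma DS_Mser[simp]: "bb T \<Longrightarrow> bb Ti \<Longrightarrow> diag_laurent b \<Longrightarrow> DS T x \<Longrightarrow> DS Ti x \<Longrightarrow> DS (Mser T Ti b) x"
  unfolding Mser_def by (simp add: bb_cser)

lemma bb_var_M[simp]: "bb T \<Longrightarrow> bb Ti \<Longrightarrow> diag_laurent b \<Longrightarrow> bb dT \<Longrightarrow> bb (var_M T Ti b dT)"
  unfolding var_M_def by (simp add: bb_cser)

lemma cser_diag: "diag_laurent b \<Longrightarrow> isdiag (cser b k x)"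
  by (simp add: diag_laurent_def cser_def)

context
  fixes U :: "(complex^'n::finite) set" and C :: "'n \<Rightarrow> 'n mfun" and T Ti :: "'n lser"
  assumes U: "open U" and dr: "dressing U C T Ti"
begin

lemma VM:
  assumes ls: "leading_span U C T Ti" and bi: "diag_laurent bi" and bj: "diag_laurent bj"
    and dv: "dressing_variation U C T Ti (flowL C (Mser T Ti bi)) dT" and y: "y \<in> U"
  shows "var_M T Ti bj dT k y = lbr (trunc (Mser T Ti bi)) (Mser T Ti bj) k y"
proof -
  have psdT: "power_ser U dT" and dvh: "\<And>\<alpha>. in_hdiag U (var_h C T Ti dT (flowL C (Mser T Ti bi)) \<alpha>)"
    using dv by (auto simp: dressing_variation_def)
  have [simp]: "bb T" "bb Ti" "bb dT" using bbT[OF U dr] bbTi[OF U dr] bb_power_ser[OF psdT] by auto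
  have DSs: "DS T z" "DS Ti z" if "z \<in> U" for z using DST[OF U dr that] DSTi[OF U dr that] by auto
  have bM: "bb (Mser T Ti bi)" using bi by simp
  have DM': "DS (Mser T Ti bi) z" if "z \<in> U" for z using bi DSs[OF that] by simp
  define X where "X = lsub (lmul Ti dT) (lmul Ti (lmul (trunc (Mser T Ti bi)) T))"
  have Xd: "isdiag (X k y)" for k unfolding X_def
    by (rule X_diag[OF U dr ls bM DM' psdT dvh y])
  have bX: "bb X" unfolding X_def using bM by simp
  have c: "FL X y * FL (cser bj) y = FL (cser bj) y * FL X y"
    by (rule FL_comm_diag[OF bX bb_cser[OF bj] Xd cser_diag[OF bj]])
  have xx: "FL X y = FL Ti y * FL dT y - FL Ti y * (ftr (FL (Mser T Ti bi) y) * FL T y)"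
    unfolding X_def using bM by simp
  have alg: "FL dT y * FL (cser bj) y * FL Ti y - FL T y * FL (cser bj) y * FL Ti y * FL dT y * FL Ti y
     = ftr (FL (Mser T Ti bi) y) * (FL T y * FL (cser bj) y * FL Ti y) - FL T y * FL (cser bj) y * FL Ti y * ftr (FL (Mser T Ti bi) y)"
    by (rule vm_alg[OF TTi[OF U dr y] TiT[OF U dr y] xx c])
  show ?thesis
  proof (rule FL_inj')
    show "bb (var_M T Ti bj dT)" using bj by simp
    show "bb (lbr (trunc (Mser T Ti bi)) (Mser T Ti bj))" using bi bj by simp
    show "FL (var_M T Ti bj dT) y = FL (lbr (trunc (Mser T Ti bi)) (Mser T Ti bj)) y"
      using alg bi bj by (simp add: var_M_def Mser_def[of T Ti bj] bb_cser)
  qed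
qed

lemma MM_comm:
  assumes b1: "diag_laurent b1" and b2: "diag_laurent b2" and y: "y \<in> U"
  shows "lbr (Mser T Ti b1) (Mser T Ti b2) k y = 0"
proof -
  have [simp]: "bb T" "bb Ti" using bbT[OF U dr] bbTi[OF U dr] by auto
  have c: "FL (cser b1) y * FL (cser b2) y = FL (cser b2) y * FL (cser b1) y"
    by (rule FL_comm_diag[OF bb_cser[OF b1] bb_cser[OF b2] cser_diag[OF b1] cser_diag[OF b2]])
  have r': "FL Ti y * (FL T y * z) = z" for z using cancel_r[OF TiT[OF U dr y]] .
  have "lbr (Mser T Ti b1) (Mser T Ti b2) k y = (\<lambda>k x. 0) k y"
  proof (rule FL_inj')
    show "bb (lbr (Mser T Ti b1) (Mser T Ti b2))" using b1 b2 by simp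
    have "FL T y * FL (cser b1) y * FL Ti y * (FL T y * FL (cser b2) y * FL Ti y)
      - FL T y * FL (cser b2) y * FL Ti y * (FL T y * FL (cser b1) y * FL Ti y)
      = FL T y * (FL (cser b1) y * FL (cser b2) y - FL (cser b2) y * FL (cser b1) y) * FL Ti y"
      by (simp add: algebra_simps r')
    then show "FL (lbr (Mser T Ti b1) (Mser T Ti b2)) y = FL (\<lambda>k x. 0) y"
      using c b1 b2 by (simp add: Mser_def bb_cser)
  qed simp
  then show ?thesis by simp
qed

end


theorem mainTheorem9:
  fixes U :: "(complex^'n::finite) set"
    and C :: "'n \<Rightarrow> 'n mfun"
    and T Ti dT1 dT2 :: "'n lser"
    and b1 b2 :: "int \<Rightarrow> complex^'n^'n"
  assumes "open U"
    and "\<forall>\<alpha> i j. mv_analytic_on (\<lambda>x. C \<alpha> x $ i $ j) U"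
    and "commuting_family U C"
    and "dressing U C T Ti"
    and "leading_span U C T Ti"
    and "diag_laurent b1" and "diag_laurent b2"
    and "dressing_variation U C T Ti (flowL C (Mser T Ti b1)) dT1"
    and "dressing_variation U C T Ti (flowL C (Mser T Ti b2)) dT2"
  shows "\<forall>\<alpha>. \<forall>x\<in>U. \<forall>k.
           mixed_second C T Ti b1 b2 dT1 \<alpha> k x = mixed_second C T Ti b2 b1 dT2 \<alpha> k x"
proof (intro allI ballI)
  fix \<alpha> x k assume x: "x \<in> U"
  note U = assms(1) and dr = assms(4) and ls = assms(5) and b1 = assms(6) and b2 = assms(7)
    and dv1 = assms(8) and dv2 = assms(9)
  have ps1: "power_ser U dT1" and ps2: "power_ser U dT2"
    using dv1 dv2 by (auto simp: dressing_variation_def)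
  have [simp]: "bb T" "bb Ti" "bb dT1" "bb dT2"
    using bbT[OF U dr] bbTi[OF U dr] bb_power_ser[OF ps1] bb_power_ser[OF ps2] by auto
  have [simp]: "DS T x" "DS Ti x" using DST[OF U dr x] DSTi[OF U dr x] by auto
  have [simp]: "diag_laurent b1" "diag_laurent b2" using b1 b2 .
  have VM12: "var_M T Ti b2 dT1 k y = lbr (trunc (Mser T Ti b1)) (Mser T Ti b2) k y" if "y \<in> U" for k y
    by (rule VM[OF U dr ls b1 b2 dv1 that])
  have VM21: "var_M T Ti b1 dT2 k y = lbr (trunc (Mser T Ti b2)) (Mser T Ti b1) k y" if "y \<in> U" for k y
    by (rule VM[OF U dr ls b2 b1 dv2 that])
  have F12: "FL (var_M T Ti b2 dT1) x = FL (lbr (trunc (Mser T Ti b1)) (Mser T Ti b2)) x"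
    by (rule FL_cong) (rule VM12[OF x])
  have F21: "FL (var_M T Ti b1 dT2) x = FL (lbr (trunc (Mser T Ti b2)) (Mser T Ti b1)) x"
    by (rule FL_cong) (rule VM21[OF x])
  have D12: "FL (ld \<alpha> (var_M T Ti b2 dT1)) x = FL (ld \<alpha> (lbr (trunc (Mser T Ti b1)) (Mser T Ti b2))) x"
    by (rule FL_ld_local[OF U x]) (rule VM12)
  have D21: "FL (ld \<alpha> (var_M T Ti b1 dT2)) x = FL (ld \<alpha> (lbr (trunc (Mser T Ti b2)) (Mser T Ti b1))) x"
    by (rule FL_ld_local[OF U x]) (rule VM21)
  have "FL (lbr (Mser T Ti b1) (Mser T Ti b2)) x = FL (\<lambda>k x. 0) x"
    by (rule FL_cong) (rule MM_comm[OF U dr b1 b2 x])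
  then have comm: "FL (Mser T Ti b1) x * FL (Mser T Ti b2) x = FL (Mser T Ti b2) x * FL (Mser T Ti b1) x"
    by simp
  have "FL (ld \<alpha> (lbr (Mser T Ti b1) (Mser T Ti b2))) x = FL (ld \<alpha> (\<lambda>k x. 0)) x"
    by (rule FL_ld_local[OF U x]) (rule MM_comm[OF U dr b1 b2])
  then have dcomm: "FL (ld \<alpha> (Mser T Ti b1)) x * FL (Mser T Ti b2) x + FL (Mser T Ti b1) x * FL (ld \<alpha> (Mser T Ti b2)) x
      = FL (ld \<alpha> (Mser T Ti b2)) x * FL (Mser T Ti b1) x + FL (Mser T Ti b2) x * FL (ld \<alpha> (Mser T Ti b1)) x"
    by simp
  note fa = final_alg[OF comm dcomm, of "FL (Lpot C \<alpha>) x"]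
  show "mixed_second C T Ti b1 b2 dT1 \<alpha> k x = mixed_second C T Ti b2 b1 dT2 \<alpha> k x"
  proof (rule FL_inj')
    show "bb (mixed_second C T Ti b1 b2 dT1 \<alpha>)" by (simp add: mixed_second_def flowL_def)
    show "bb (mixed_second C T Ti b2 b1 dT2 \<alpha>)" by (simp add: mixed_second_def flowL_def)
    show "FL (mixed_second C T Ti b1 b2 dT1 \<alpha>) x = FL (mixed_second C T Ti b2 b1 dT2 \<alpha>) x"
      using fa by (simp add: mixed_second_def flowL_def F12 F21 D12 D21)
  qed
qed


end
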